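(* Let $\lambda\in\overline{\mathrm{Pr}}_k$ and $\mu\in W\cdot\lambda$. Then $\mu\in\overline{\mathrm{Pr}}_k$ if and only if $\mu=w^{-1}\cdot\lambda$ for some $w\in W^\lambda$, where $W^\lambda=\{w\in W:\Delta_+\cap w(\Delta_-)\subset\Delta_+\setminus\Delta(\lambda)\}$ and $\Delta(\lambda)=\{\alpha\in\Delta:\langle\lambda+\rho,\alpha^\vee\rangle\in\mathbb Z\}$.
   Context: Let $\mathfrak g=\mathfrak{sl}_{n+1}(\mathbb C)$, $n\ge1$, $\mathfrak h$ the traceless diagonal matrices, $\Delta=\{\varepsilon_i-\varepsilon_j:i\neq j\}$, $\Delta_+=\{\varepsilon_i-\varepsilon_j:i<j\}$, $\Delta_-=-\Delta_+$, $\alpha_i=\varepsilon_i-\varepsilon_{i+1}$; $(\cdot,\cdot)$ the invariant form on $\mathfrak h^*$ with $(\alpha,\alpha)=2$ for roots, $\langle\mu,\alpha^\vee\rangle=(\mu,\alpha)$; $\omega_i$ fundamental weights, $P^\vee=\bigoplus\mathbb Z\omega_i$, $\rho=\sum\omega_i$; $W$ the Weyl group, $w\cdot\mu=w(\mu+\rho)-\rho$. Fix $k\in\mathbb Q$ with $k+n+1=p/q$, $p,q\in\mathbb N$ coprime, $p\ge n+1$. $\overline{\mathrm{Pr}}_{k,\mathbb Z}=\{\sum\lambda_i\omega_i:\lambda_i\in\mathbb N_0,\sum\lambda_i\le p-n-1\}$. For $w\in W,\eta\in P^\vee$, $C(w,\eta)$ means: for all $\alpha\in\Delta_+$, $0\le(\eta,\alpha)\le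 q-1$ if $w(\alpha)\in\Delta_+$ and $1\le(\eta,\alpha)\le q$ if $w(\alpha)\in\Delta_-$. The admissible weights of level $k$: $\overline{\mathrm{Pr}}_k=\{w\cdot(\mu-\tfrac pq\eta):\mu\in\overline{\mathrm{Pr}}_{k,\mathbb Z},w\in W,\eta\in P^\vee,C(w,\eta)\}$. *)

theory Defs
  imports Complex_Main "HOL-Combinatorics.Permutations"
begin

text \<open>Model of sl_(n+1): h* is identified with the traceless vectors in Q^(n+1),
  written as functions x :: nat => rat with coordinates x 0, ..., x n (zero beyond n)
  and sum zero.  The root eps_i - eps_j (i ~= j, i,j <= n) is the pair (i,j);
  the pairing (x, eps_i - eps_j) = x i - x j equals <x, alpha^vee>.\<close>

type_synonym wt = "nat \<Rightarrow> rat"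
type_synonym root = "nat \<times> nat"

definition roots :: "nat \<Rightarrow> root set" where
  "roots n = {(i,j). i \<le> n \<and> j \<le> n \<and> i \<noteq> j}"

definition pos_roots :: "nat \<Rightarrow> root set" where
  "pos_roots n = {(i,j). i \<le> n \<and> j \<le> n \<and> i < j}"

definition neg_roots :: "nat \<Rightarrow> root set" where
  "neg_roots n = {(i,j). i \<le> n \<and> j \<le> n \<and> j < i}"

definition pair :: "wt \<Rightarrow> root \<Rightarrow> rat" where
  "pair x a = x (fst a) - x (snd a)"

definition weyl :: "nat \<Rightarrow> (nat \<Rightarrow> nat) set" where
  "weyl n = {\<sigma>. \<sigma> permutes {..n}}"

definition wact :: "(nat \<Rightarrow> nat) \<Rightarrow> wt \<Rightarrow> wt" where
  "wact \<sigma> x = x \<circ> inv \<sigma>"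

definition ract :: "(nat \<Rightarrow> nat) \<Rightarrow> root \<Rightarrow> root" where
  "ract \<sigma> a = (\<sigma> (fst a), \<sigma> (snd a))"

definition wadd :: "wt \<Rightarrow> wt \<Rightarrow> wt" where
  "wadd x y = (\<lambda>i. x i + y i)"

definition wsub :: "wt \<Rightarrow> wt \<Rightarrow> wt" where
  "wsub x y = (\<lambda>i. x i - y i)"

definition wscale :: "rat \<Rightarrow> wt \<Rightarrow> wt" where
  "wscale c x = (\<lambda>i. c * x i)"

text \<open>rho = sum of fundamental weights: coordinates n/2 - i.\<close>
definition rho :: "nat \<Rightarrow> wt" where
  "rho n = (\<lambda>i. if i \<le> n then of_nat n / 2 - of_nat i else 0)"

text \<open>fundamental weight omega_i (1 <= i <= n): eps_1+...+eps_i projected to traceless part\<close>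
definition omega :: "nat \<Rightarrow> nat \<Rightarrow> wt" where
  "omega n i = (\<lambda>j. if j \<le> n then (if j < i then 1 else 0) - of_nat i / of_nat (n+1) else 0)"

definition dot_act :: "nat \<Rightarrow> (nat \<Rightarrow> nat) \<Rightarrow> wt \<Rightarrow> wt" where
  "dot_act n \<sigma> x = wsub (wact \<sigma> (wadd x (rho n))) (rho n)"

definition coweight_lattice :: "nat \<Rightarrow> wt set" where
  "coweight_lattice n = {(\<lambda>j. \<Sum>i\<in>{1..n}. of_int (c i) * omega n i j) | c :: nat \<Rightarrow> int. True}"

definition PrZ :: "nat \<Rightarrow> nat \<Rightarrow> wt set" where
  "PrZ n p = {(\<lambda>j. \<Sum>i\<in>{1..n}. of_nat (l i) * omega n i j) | l :: nat \<Rightarrow> nat.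
               (\<Sum>i\<in>{1..n}. l i) \<le> p - n - 1}"

definition condC :: "nat \<Rightarrow> nat \<Rightarrow> (nat \<Rightarrow> nat) \<Rightarrow> wt \<Rightarrow> bool" where
  "condC n q w \<eta> \<longleftrightarrow> (\<forall>a \<in> pos_roots n.
      (ract w a \<in> pos_roots n \<longrightarrow> 0 \<le> pair \<eta> a \<and> pair \<eta> a \<le> of_nat q - 1) \<and>
      (ract w a \<in> neg_roots n \<longrightarrow> 1 \<le> pair \<eta> a \<and> pair \<eta> a \<le> of_nat q))"

text \<open>Admissible weights of level k, where k + n + 1 = p/q.\<close>
definition Pr :: "nat \<Rightarrow> nat \<Rightarrow> nat \<Rightarrow> wt set" where
  "Pr n p q = {dot_act n w (wsub \<mu> (wscale (of_nat p / of_nat q) \<eta>)) | \<mu> w \<eta>.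
       \<mu> \<in> PrZ n p \<and> w \<in> weyl n \<and> \<eta> \<in> coweight_lattice n \<and> condC n q w \<eta>}"

definition int_roots :: "nat \<Rightarrow> wt \<Rightarrow> root set" where
  "int_roots n lam = {a \<in> roots n. pair (wadd lam (rho n)) a \<in> \<int>}"

definition Wlam :: "nat \<Rightarrow> wt \<Rightarrow> (nat \<Rightarrow> nat) set" where
  "Wlam n lam = {w \<in> weyl n. pos_roots n \<inter> ract w ` neg_roots n \<subseteq> pos_roots n - int_roots n lam}"

end

theory Submission
  imports Defs
begin

lemma wadd_dot: "wadd (dot_act n \<sigma> x) (rho n) = wact \<sigma> (wadd x (rho n))"
  by (auto simp: dot_act_def wadd_def wsub_def wact_def)

lemma pair_wact: "\<sigma> permutes S \<Longrightarrow> pair (wact \<sigma> y) (\<sigma> a, \<sigma> b) = pair y (a,b)"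
  by (simp add: pair_def wact_def permutes_inverses(2))

lemma PrZ_pair:
  assumes "\<mu> \<in> PrZ n p" "a < b" "b \<le> n" "p \<ge> n+1"
  shows "\<exists>m::int. pair (wadd \<mu> (rho n)) (a,b) = of_int m \<and> 1 \<le> m \<and> m \<le> int p - 1"
proof -
  obtain l where mu: "\<mu> = (\<lambda>j. \<Sum>i\<in>{1..n}. of_nat (l i) * omega n i j)"
    and sl: "(\<Sum>i\<in>{1..n}. l i) \<le> p - n - 1" using assms(1) unfolding PrZ_def by blast
  define S where "S = (\<Sum>i\<in>{1..n}. if a < i \<and> i \<le> b then l i else 0)"
  have S1: "S \<le> (\<Sum>i\<in>{1..n}. l i)" unfolding S_def by (rule sum_mono) auto
  have "\<mu> a - \<mu> b = (\<Sum>i\<in>{1..n}. of_nat (l i) * omega n i a - of_nat (l i) * omega n i b)"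
    by (simp add: mu sum_subtractf)
  also have "\<dots> = (\<Sum>i\<in>{1..n}. of_nat (if a < i \<and> i \<le> b then l i else 0))"
    by (rule sum.cong) (use assms in \<open>auto simp: omega_def algebra_simps\<close>)
  also have "\<dots> = of_nat S" by (simp add: S_def)
  finally have mab: "\<mu> a - \<mu> b = of_nat S" .
  have rho: "rho n a - rho n b = of_nat (b - a)" using assms by (simp add: rho_def of_nat_diff)
  have "pair (wadd \<mu> (rho n)) (a,b) = of_int (int (b-a) + int S)"
    using mab rho by (simp add: pair_def wadd_def algebra_simps)
  moreover have "1 \<le> int (b-a) + int S" using assms by simp
  moreover have "int (b-a) + int S \<le> int p - 1" using assms S1 sl by linarith
  ultimately show ?thesis by blast
qed

lemma cow_pair:
  assumes "\<eta> \<in> coweight_lattice n" "a \<le> n" "b \<le> n"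
  shows "pair \<eta> (a,b) \<in> \<int>"
proof -
  obtain c where eta: "\<eta> = (\<lambda>j. \<Sum>i\<in>{1..n}. of_int (c i) * omega n i j)"
    using assms(1) unfolding coweight_lattice_def by blast
  have "pair \<eta> (a,b) = (\<Sum>i\<in>{1..n}. of_int (c i) * omega n i a - of_int (c i) * omega n i b)"
    by (simp add: eta pair_def sum_subtractf)
  also have "\<dots> = (\<Sum>i\<in>{1..n}. of_int (c i * ((if a < i then 1 else 0) - (if b < i then 1 else 0))))"
    by (rule sum.cong) (use assms in \<open>auto simp: omega_def algebra_simps\<close>)
  also have "\<dots> \<in> \<int>" by (simp only: of_int_sum[symmetric] Ints_of_int)
  finally show ?thesis .
qed

lemma divq:
  assumes "q \<ge> 1" "coprime p q" "e \<in> \<int>" "of_nat p / of_nat q * e \<in> (\<int>::rat set)"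
  shows "\<exists>t::int. e = of_int (int q * t)"
proof -
  obtain e' where e: "e = of_int e'" using assms(3) Ints_cases by blast
  obtain m where m: "of_nat p / of_nat q * e = of_int m" using assms(4) Ints_cases by blast
  have "of_int (int p * e') = (of_int (int q * m) :: rat)"
    using m e assms(1) by (simp add: field_simps)
  hence "int p * e' = int q * m" by (simp only: of_int_eq_iff)
  hence "int q dvd int p * e'" by simp
  moreover have "coprime (int q) (int p)" using assms(2) by (simp add: coprime_commute)
  ultimately have "int q dvd e'" using coprime_dvd_mult_right_iff by blast
  then obtain t where "e' = int q * t" by blast
  thus ?thesis using e by blast
qed

lemma pair_nu: "pair (wadd (wsub \<mu> (wscale c \<eta>)) (rho n)) (a,b) = pair (wadd \<mu> (rho n)) (a,b) - c * pair \<eta> (a,b)"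
  by (simp add: pair_def wadd_def wsub_def wscale_def algebra_simps)

lemma pair_dot: "w permutes S \<Longrightarrow> pair (wadd (dot_act n w x) (rho n)) (w a, w b) = pair (wadd x (rho n)) (a,b)"
  by (simp add: wadd_dot pair_wact)

lemma PrA:
  assumes q: "q \<ge> 1" and cp: "coprime p q" and pn: "p \<ge> n+1" and lam: "lam \<in> Pr n p q"
    and ij: "(i,j) \<in> pos_roots n" and int: "pair (wadd lam (rho n)) (i,j) \<in> \<int>"
  shows "pair (wadd lam (rho n)) (i,j) > 0"
proof -
  define c :: rat where "c = of_nat p / of_nat q"
  obtain \<mu>0 w \<eta> where mu0: "\<mu>0 \<in> PrZ n p" and w: "w \<in> weyl n" and eta: "\<eta> \<in> coweight_lattice n"
    and C: "condC n q w \<eta>" and ld: "lam = dot_act n w (wsub \<mu>0 (wscale c \<eta>))"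
    using lam unfolding Pr_def c_def by blast
  have wp: "w permutes {..n}" using w by (simp add: weyl_def)
  define a where "a = inv w i"
  define b where "b = inv w j"
  have wa: "w a = i" "w b = j" using wp by (simp_all add: a_def b_def permutes_inverses(1))
  have ijn: "i \<le> n" "j \<le> n" "i < j" using ij by (auto simp: pos_roots_def)
  have abn: "a \<le> n" "b \<le> n" using ijn permutes_inv[OF wp] unfolding a_def b_def
    by (metis atMost_iff permutes_in_image)+
  have "a \<noteq> b" using wa ijn by auto
  have key: "pair (wadd lam (rho n)) (i,j) = pair (wadd \<mu>0 (rho n)) (a,b) - c * pair \<eta> (a,b)"
    using pair_dot[OF wp, of n "wsub \<mu>0 (wscale c \<eta>)" a b] wa ld pair_nu by simp
  show ?thesis
  proof (cases "a < b")
    case True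
    obtain m where m: "pair (wadd \<mu>0 (rho n)) (a,b) = of_int m" "1 \<le> m" "m \<le> int p - 1"
      using PrZ_pair[OF mu0 True abn(2) pn] by blast
    have "(a,b) \<in> pos_roots n" using True abn by (simp add: pos_roots_def)
    moreover have "ract w (a,b) \<in> pos_roots n" using wa ij by (simp add: ract_def)
    ultimately have e: "0 \<le> pair \<eta> (a,b)" "pair \<eta> (a,b) \<le> of_nat q - 1" using C by (auto simp: condC_def)
    have eI: "pair \<eta> (a,b) \<in> \<int>" using cow_pair[OF eta abn] .
    have "c * pair \<eta> (a,b) = of_int m - pair (wadd lam (rho n)) (i,j)" using key m by simp
    also have "\<dots> \<in> \<int>" using int by simp
    finally obtain t where t: "pair \<eta> (a,b) = of_int (int q * t)"
      using divq[OF q cp eI] c_def by blast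
    have "t = 0"
    proof -
      have h1: "of_int 0 \<le> (of_int (int q * t)::rat)" using e t by simp
      have h2: "(of_int (int q * t)::rat) \<le> of_int (int q - 1)" using e t by simp
      from h1 h2 have "0 \<le> int q * t" "int q * t \<le> int q - 1" by (simp_all only: of_int_le_iff)
      moreover have "t \<ge> 1 \<or> t \<le> -1" if "t \<noteq> 0" using that by linarith
      ultimately show ?thesis using q mult_left_mono[of 1 t "int q"] mult_left_mono[of t "-1" "int q"] by force
    qed
    then show ?thesis using key m t by simp
  next
    case False
    hence ba: "b < a" using \<open>a \<noteq> b\<close> by simp
    obtain m where m: "pair (wadd \<mu>0 (rho n)) (b,a) = of_int m" "1 \<le> m" "m \<le> int p - 1"
      using PrZ_pair[OF mu0 ba abn(1) pn] by blast
    have "(b,a) \<in> pos_roots n" using ba abn by (simp add: pos_roots_def)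
    moreover have "ract w (b,a) \<in> neg_roots n" using wa ij by (auto simp: ract_def pos_roots_def neg_roots_def)
    ultimately have e: "1 \<le> pair \<eta> (b,a)" "pair \<eta> (b,a) \<le> of_nat q" using C by (auto simp: condC_def)
    have eI: "pair \<eta> (b,a) \<in> \<int>" using cow_pair[OF eta abn(2,1)] .
    have key2: "pair (wadd lam (rho n)) (i,j) = c * pair \<eta> (b,a) - pair (wadd \<mu>0 (rho n)) (b,a)"
      using key by (simp add: pair_def algebra_simps)
    have "c * pair \<eta> (b,a) = pair (wadd lam (rho n)) (i,j) + of_int m" using key2 m by simp
    also have "\<dots> \<in> \<int>" using int by simp
    finally obtain t where t: "pair \<eta> (b,a) = of_int (int q * t)"
      using divq[OF q cp eI] c_def by blast
    have "t = 1"
    proof -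
      have h1: "of_int 1 \<le> (of_int (int q * t)::rat)" using e t by simp
      have h2: "(of_int (int q * t)::rat) \<le> of_int (int q)" using e t by simp
      from h1 h2 have "1 \<le> int q * t" "int q * t \<le> int q" by (simp_all only: of_int_le_iff)
      moreover have "t \<ge> 2 \<or> t \<le> 0" if "t \<noteq> 1" using that by linarith
      ultimately show ?thesis using q mult_left_mono[of 2 t "int q"] mult_left_mono[of t 0 "int q"] by force
    qed
    hence "c * pair \<eta> (b,a) = of_nat p" using t q by (simp add: c_def)
    then show ?thesis using key2 m by simp
  qed
qed

lemma dot_comp: "\<sigma> permutes S \<Longrightarrow> \<tau> permutes S \<Longrightarrow> dot_act n \<sigma> (dot_act n \<tau> x) = dot_act n (\<sigma> \<circ> \<tau>) x"
  by (rule ext) (simp add: dot_act_def wact_def wadd_def wsub_def o_inv_distrib permutes_bij)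

lemma dir1:
  assumes q: "q \<ge> 1" and cp: "coprime p q" and pn: "p \<ge> n+1" and lam: "lam \<in> Pr n p q"
    and u: "u \<in> weyl n" and mu: "\<mu> = dot_act n u lam" and muP: "\<mu> \<in> Pr n p q"
  shows "\<exists>w \<in> Wlam n lam. \<mu> = dot_act n (inv w) lam"
proof
  have up: "u permutes {..n}" using u by (simp add: weyl_def)
  show "\<mu> = dot_act n (inv (inv u)) lam" using mu by (simp add: inv_inv_eq permutes_bij[OF up])
  have "inv u \<in> weyl n" using permutes_inv[OF up] by (simp add: weyl_def)
  moreover have "pos_roots n \<inter> ract (inv u) ` neg_roots n \<subseteq> pos_roots n - int_roots n lam"
  proof
    fix g assume g: "g \<in> pos_roots n \<inter> ract (inv u) ` neg_roots n"
    then obtain a b where ab: "(a,b) \<in> neg_roots n" "g = (inv u a, inv u b)" by (auto simp: ract_def)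
    have gp: "(inv u a, inv u b) \<in> pos_roots n" using g ab by simp
    show "g \<in> pos_roots n - int_roots n lam"
    proof (rule ccontr)
      assume "g \<notin> pos_roots n - int_roots n lam"
      hence gi: "pair (wadd lam (rho n)) (inv u a, inv u b) \<in> \<int>" using g ab by (auto simp: int_roots_def)
      have pos: "pair (wadd lam (rho n)) (inv u a, inv u b) > 0" using PrA[OF q cp pn lam gp gi] .
      have eq: "pair (wadd \<mu> (rho n)) (a,b) = pair (wadd lam (rho n)) (inv u a, inv u b)"
        using pair_dot[OF up, of n lam "inv u a" "inv u b"] mu by (simp add: permutes_inverses(1)[OF up])
      have ba: "(b,a) \<in> pos_roots n" using ab by (auto simp: neg_roots_def pos_roots_def)
      have "pair (wadd \<mu> (rho n)) (b,a) = - pair (wadd \<mu> (rho n)) (a,b)" by (simp add: pair_def)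
      hence i2: "pair (wadd \<mu> (rho n)) (b,a) \<in> \<int>" and n2: "pair (wadd \<mu> (rho n)) (b,a) < 0"
        using eq gi pos by auto
      show False using PrA[OF q cp pn muP ba i2] n2 by simp
    qed
  qed
  ultimately show "inv u \<in> Wlam n lam" by (simp add: Wlam_def)
qed

lemma dir2:
  assumes q: "q \<ge> 1" and cp: "coprime p q" and pn: "p \<ge> n+1" and lam: "lam \<in> Pr n p q"
    and w: "w \<in> Wlam n lam" and mu: "\<mu> = dot_act n (inv w) lam"
  shows "\<mu> \<in> Pr n p q"
proof -
  define c :: rat where "c = of_nat p / of_nat q"
  obtain \<mu>0 w0 \<eta> where mu0: "\<mu>0 \<in> PrZ n p" and w0: "w0 \<in> weyl n" and eta: "\<eta> \<in> coweight_lattice n"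
    and C: "condC n q w0 \<eta>" and ld: "lam = dot_act n w0 (wsub \<mu>0 (wscale c \<eta>))"
    using lam unfolding Pr_def c_def by blast
  have w0p: "w0 permutes {..n}" using w0 by (simp add: weyl_def)
  have wp: "w permutes {..n}" and W: "pos_roots n \<inter> ract w ` neg_roots n \<subseteq> pos_roots n - int_roots n lam"
    using w by (auto simp: Wlam_def weyl_def)
  define u where "u = inv w"
  have up: "u permutes {..n}" using permutes_inv[OF wp] by (simp add: u_def)
  have wu: "\<And>x. w (u x) = x" using wp by (simp add: u_def permutes_inverses(1))
  have mu2: "\<mu> = dot_act n (u \<circ> w0) (wsub \<mu>0 (wscale c \<eta>))"
    using mu ld dot_comp[OF up w0p] by (simp add: u_def)
  have uw0: "u \<circ> w0 \<in> weyl n" using permutes_compose[OF w0p up] by (simp add: weyl_def)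
  have inW: "(x,y) \<notin> int_roots n lam" if "(x,y) \<in> pos_roots n" "(u x, u y) \<in> neg_roots n" for x y
  proof -
    have "(x,y) \<in> ract w ` neg_roots n" proof (rule image_eqI)
      show "(x,y) = ract w (u x, u y)" by (simp add: ract_def wu)
    qed (rule that(2))
    thus ?thesis using W that(1) by blast
  qed
  have inroots: "(x,y) \<in> pos_roots n \<Longrightarrow> (x,y) \<in> roots n" for x y by (auto simp: pos_roots_def roots_def)
  have uin: "x \<le> n \<Longrightarrow> u x \<le> n" for x using permutes_in_image[OF up] by auto
  have uinj: "u x = u y \<Longrightarrow> x = y" for x y using permutes_inj[OF up] by (simp add: inj_eq)
  have Cn: "condC n q (u \<circ> w0) \<eta>"
    unfolding condC_def
  proof
    fix al assume al: "al \<in> pos_roots n"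
    obtain a b where ab: "al = (a,b)" by (cases al)
    have abn: "a < b" "b \<le> n" "a \<le> n" using al ab by (auto simp: pos_roots_def)
    define x where "x = w0 a"
    define y where "y = w0 b"
    have xyn: "x \<le> n" "y \<le> n" "x \<noteq> y" using abn permutes_in_image[OF w0p] permutes_inj[OF w0p]
      by (auto simp: x_def y_def inj_eq)
    have uxy: "u x \<noteq> u y" "u x \<le> n" "u y \<le> n" using xyn uinj uin by auto
    obtain m where m: "pair (wadd \<mu>0 (rho n)) (a,b) = of_int m" "1 \<le> m" "m \<le> int p - 1"
      using PrZ_pair[OF mu0 abn(1) abn(2) pn] by blast
    have key: "pair (wadd lam (rho n)) (x,y) = of_int m - c * pair \<eta> (a,b)"
      using pair_dot[OF w0p, of n "wsub \<mu>0 (wscale c \<eta>)" a b] ld pair_nu m by (simp add: x_def y_def)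
    have eI: "pair \<eta> (a,b) \<in> \<int>" using cow_pair[OF eta abn(3,2)] .
    have r: "ract (u \<circ> w0) al = (u x, u y)" "ract w0 al = (x,y)" by (simp_all add: ab ract_def x_def y_def)
    show "(ract (u \<circ> w0) al \<in> pos_roots n \<longrightarrow> 0 \<le> pair \<eta> al \<and> pair \<eta> al \<le> of_nat q - 1) \<and>
      (ract (u \<circ> w0) al \<in> neg_roots n \<longrightarrow> 1 \<le> pair \<eta> al \<and> pair \<eta> al \<le> of_nat q)"
    proof (cases "x < y")
      case True
      have xp: "(x,y) \<in> pos_roots n" using True xyn by (simp add: pos_roots_def)
      have e: "0 \<le> pair \<eta> (a,b)" "pair \<eta> (a,b) \<le> of_nat q - 1"
        using C al xp r by (auto simp: condC_def ab)
      have "1 \<le> pair \<eta> (a,b)" if neg: "(u x, u y) \<in> neg_roots n"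
      proof (rule ccontr)
        assume "\<not> 1 \<le> pair \<eta> (a,b)"
        moreover obtain e' where e': "pair \<eta> (a,b) = of_int e'" using eI Ints_cases by blast
        ultimately have "e' < 1" "0 \<le> e'" using e by simp_all
        then have "pair \<eta> (a,b) = 0" using e' by simp
        hence "pair (wadd lam (rho n)) (x,y) \<in> \<int>" using key by simp
        hence "(x,y) \<in> int_roots n lam" using inroots[OF xp] by (simp add: int_roots_def)
        thus False using inW[OF xp neg] by simp
      qed
      thus ?thesis using e r by (auto simp: ab)
    next
      case False
      hence yx: "y < x" using xyn by simp
      have yp: "(y,x) \<in> pos_roots n" using yx xyn by (simp add: pos_roots_def)
      have xn: "(x,y) \<in> neg_roots n" using yx xyn by (simp add: neg_roots_def)
      have e: "1 \<le> pair \<eta> (a,b)" "pair \<eta> (a,b) \<le> of_nat q"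
        using C al xn r by (auto simp: condC_def ab)
      have "pair \<eta> (a,b) \<le> of_nat q - 1" if pos: "(u x, u y) \<in> pos_roots n"
      proof (rule ccontr)
        assume "\<not> pair \<eta> (a,b) \<le> of_nat q - 1"
        moreover obtain e' where e': "pair \<eta> (a,b) = of_int e'" using eI Ints_cases by blast
        ultimately have h1: "(of_int (int q - 1)::rat) < of_int e'" "(of_int e'::rat) \<le> of_int (int q)" using e by simp_all
        then have "int q - 1 < e'" "e' \<le> int q" by (simp_all only: of_int_less_iff of_int_le_iff)
        then have "e' = int q" by simp
        then have "pair \<eta> (a,b) = of_nat q" using e' by simp
        hence "c * pair \<eta> (a,b) = of_nat p" using q by (simp add: c_def)
        hence "pair (wadd lam (rho n)) (y,x) = of_nat p - of_int m" using key by (simp add: pair_def)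
        hence "pair (wadd lam (rho n)) (y,x) \<in> \<int>" by simp
        hence "(y,x) \<in> int_roots n lam" using inroots[OF yp] by (simp add: int_roots_def)
        moreover have "(u y, u x) \<in> neg_roots n" using pos by (auto simp: pos_roots_def neg_roots_def)
        ultimately show False using inW[OF yp] by simp
      qed
      moreover have "(u x, u y) \<in> pos_roots n \<or> (u x, u y) \<in> neg_roots n" using uxy
        by (auto simp: pos_roots_def neg_roots_def)
      moreover have "\<not> ((u x, u y) \<in> pos_roots n \<and> (u x, u y) \<in> neg_roots n)"
        by (auto simp: pos_roots_def neg_roots_def)
      ultimately show ?thesis using e r by (auto simp: ab)
    qed
  qed
  show ?thesis unfolding Pr_def using mu2 mu0 uw0 eta Cn unfolding c_def by blast
qed

theorem mainTheorem7:
  fixes n p q :: nat and k :: rat and lam \<mu> :: wt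
  assumes "n \<ge> 1" and "q \<ge> 1" and "coprime p q" and "p \<ge> n + 1"
    and "k + of_nat n + 1 = of_nat p / of_nat q"
    and "lam \<in> Pr n p q"
    and "\<mu> \<in> (\<lambda>w. dot_act n w lam) ` weyl n"
  shows "\<mu> \<in> Pr n p q \<longleftrightarrow> (\<exists>w \<in> Wlam n lam. \<mu> = dot_act n (inv w) lam)"
proof
  obtain u where "u \<in> weyl n" "\<mu> = dot_act n u lam" using assms(7) by blast
  then show "\<mu> \<in> Pr n p q \<Longrightarrow> \<exists>w \<in> Wlam n lam. \<mu> = dot_act n (inv w) lam"
    using dir1[OF assms(2,3) _ assms(6)] assms(4) by simp
next
  assume "\<exists>w \<in> Wlam n lam. \<mu> = dot_act n (inv w) lam"
  then show "\<mu> \<in> Pr n p q" using dir2[OF assms(2,3) _ assms(6)] assms(4) by auto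
qed

end
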